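(* Let $\bm{w}^\star\in\mathbb{R}^m$ with $\|\bm{w}^\star\|_2\le1$, let $\bm{w}\in\mathbb{B}(\bm{w}^\star,r_{\mathrm{CNN}})$ with $r_{\mathrm{CNN}}=c\frac{\rho_{\mathrm{CNN}}(\|\bm{w}^\star\|_2)}{K^2}$ the radius on which the population Hessian satisfies $C_3\frac{\rho_{\mathrm{CNN}}(\|\bm{w}^\star\|_2)}{K}\bm{I}\preceq\nabla^2 f(\bm{w})\preceq C_4K\bm{I}$, and let $\bm{v}\in\mathbb{R}^m$ with $\|\bm{v}\|_2=1$. Define $G=\langle\bm{v},(\nabla^2\ell(\bm{w};\bm{x},y)-\mathbb{E}[\nabla^2\ell(\bm{w};\bm{x},y)])\bm{v}\rangle$. There exists a constant $C$ such that $\|G\|_{\psi_1}\le CK^2$.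
   Context: $\phi(x)=1/(1+e^{-x})$. $d=mK$, $\bm{x}^{(k)}=(x_{m(k-1)+1},\dots,x_{mk})^\top$, $H(\bm{w},\bm{x})=\frac1K\sum_{k=1}^K\phi(\bm{w}^\top\bm{x}^{(k)})$ for $\bm{w}\in\mathbb{R}^m$. $\bm{x}\sim\mathcal{N}(\bm{0},\bm{I}_d)$, $y\in\{0,1\}$ with $\mathbb{P}(y=1\mid\bm{x})=H(\bm{w}^\star,\bm{x})$. Loss $\ell(\bm{w};\bm{x},y)=-y\log H(\bm{w},\bm{x})-(1-y)\log(1-H(\bm{w},\bm{x}))$, population risk $f=\mathbb{E}[\ell]$. With $z\sim\mathcal{N}(0,\sigma^2)$, $\rho_{\mathrm{CNN}}(\sigma)=\min\{\mathbb{E}[(\phi'(z)z)^2],\mathbb{E}[\phi'(z)^2]\}$. $\|X\|_{\psi_1}=\sup_{p\ge1}p^{-1}(\mathbb{E}|X|^p)^{1/p}$. *)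

theory Defs
  imports "HOL-Probability.Probability"
begin

definition sigmoid :: "real \<Rightarrow> real" where
  "sigmoid x = 1 / (1 + exp (- x))"

(* vectors in R^n are represented as nat => real; only indices < n matter *)
definition vnorm :: "nat \<Rightarrow> (nat \<Rightarrow> real) \<Rightarrow> real" where
  "vnorm n w = sqrt (\<Sum>i<n. (w i)^2)"

(* <w, x^(k+1)> : the (k+1)-th block of x (0-indexed block k), x^(k+1) = (x_{mk+1},...,x_{m(k+1)}) *)
definition blk_inner :: "nat \<Rightarrow> (nat \<Rightarrow> real) \<Rightarrow> (nat \<Rightarrow> real) \<Rightarrow> nat \<Rightarrow> real" where
  "blk_inner m w x k = (\<Sum>i<m. w i * x (m * k + i))"

definition Hcnn :: "nat \<Rightarrow> nat \<Rightarrow> (nat \<Rightarrow> real) \<Rightarrow> (nat \<Rightarrow> real) \<Rightarrow> real" where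
  "Hcnn m K w x = (1 / real K) * (\<Sum>k<K. sigmoid (blk_inner m w x k))"

(* cross-entropy loss; y = True encodes y = 1 *)
definition loss :: "nat \<Rightarrow> nat \<Rightarrow> (nat \<Rightarrow> real) \<Rightarrow> (nat \<Rightarrow> real) \<Rightarrow> bool \<Rightarrow> real" where
  "loss m K w x y = - (of_bool y) * ln (Hcnn m K w x) - (1 - of_bool y) * ln (1 - Hcnn m K w x)"

definition partial :: "nat \<Rightarrow> ((nat \<Rightarrow> real) \<Rightarrow> real) \<Rightarrow> (nat \<Rightarrow> real) \<Rightarrow> real" where
  "partial i g w = deriv (\<lambda>t. g (w(i := t))) (w i)"

definition hess :: "((nat \<Rightarrow> real) \<Rightarrow> real) \<Rightarrow> (nat \<Rightarrow> real) \<Rightarrow> nat \<Rightarrow> nat \<Rightarrow> real" where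
  "hess g w i j = partial j (\<lambda>u. partial i g u) w"

definition std_gauss :: "real measure" where
  "std_gauss = density lborel std_normal_density"

definition gauss_vec :: "nat \<Rightarrow> (nat \<Rightarrow> real) measure" where
  "gauss_vec d = PiM {..<d} (\<lambda>_. std_gauss)"

definition data_measure :: "nat \<Rightarrow> nat \<Rightarrow> (nat \<Rightarrow> real) \<Rightarrow> ((nat \<Rightarrow> real) \<times> bool) measure" where
  "data_measure m K wstar =
     density (gauss_vec (m * K) \<Otimes>\<^sub>M count_space UNIV)
       (\<lambda>(x, y). ennreal (if y then Hcnn m K wstar x else 1 - Hcnn m K wstar x))"

definition exp_hess :: "nat \<Rightarrow> nat \<Rightarrow> (nat \<Rightarrow> real) \<Rightarrow> (nat \<Rightarrow> real) \<Rightarrow> nat \<Rightarrow> nat \<Rightarrow> real" where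
  "exp_hess m K wstar w i j =
     integral\<^sup>L (data_measure m K wstar) (\<lambda>(x, y). hess (\<lambda>u. loss m K u x y) w i j)"

definition Gvar :: "nat \<Rightarrow> nat \<Rightarrow> (nat \<Rightarrow> real) \<Rightarrow> (nat \<Rightarrow> real) \<Rightarrow> (nat \<Rightarrow> real)
                    \<Rightarrow> (nat \<Rightarrow> real) \<times> bool \<Rightarrow> real" where
  "Gvar m K wstar w v = (\<lambda>(x, y).
     (\<Sum>i<m. \<Sum>j<m. v i * (hess (\<lambda>u. loss m K u x y) w i j - exp_hess m K wstar w i j) * v j))"

definition psi1_norm :: "'a measure \<Rightarrow> ('a \<Rightarrow> real) \<Rightarrow> ereal" where
  "psi1_norm M X =
     (SUP p\<in>{1::real..}.
        (let mom = (\<integral>\<^sup>+ \<omega>. ennreal (\<bar>X \<omega>\<bar> powr p) \<partial>M)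
         in if mom = \<top> then \<infinity> else ereal (enn2real mom powr (1 / p) / p)))"

definition gauss_scalar :: "real \<Rightarrow> real measure" where
  "gauss_scalar \<sigma> = (if \<sigma> = 0 then return lborel 0 else density lborel (normal_density 0 \<sigma>))"

definition rho_cnn :: "real \<Rightarrow> real" where
  "rho_cnn \<sigma> = min (integral\<^sup>L (gauss_scalar \<sigma>) (\<lambda>z. (deriv sigmoid z * z)^2))
                     (integral\<^sup>L (gauss_scalar \<sigma>) (\<lambda>z. (deriv sigmoid z)^2))"

end

theory Submission
  imports Defs
begin


definition ds :: "real \<Rightarrow> real" where "ds t = sigmoid t * (1 - sigmoid t)"
definition dds :: "real \<Rightarrow> real" where "dds t = ds t * (1 - 2 * sigmoid t)"

lemma sigmoid_pos: "0 < sigmoid t"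
  unfolding sigmoid_def by (simp add: add_pos_pos)

lemma sigmoid_lt1: "sigmoid t < 1"
  unfolding sigmoid_def by (simp add: add_pos_pos)

lemma sigmoid_neg: "sigmoid (- t) = 1 - sigmoid t"
proof -
  have e: "exp (-t) = 1 / exp t" by (simp add: exp_minus divide_inverse)
  have p: "1 + exp t \<noteq> 0" by (smt (verit) exp_gt_zero)
  have "1 / (1 + exp t) + exp t / (1 + exp t) = 1"
    using p by (simp add: add_divide_distrib[symmetric])
  then show ?thesis unfolding sigmoid_def e using p by (simp add: field_simps)
qed

lemma ds_pos: "0 < ds t" unfolding ds_def using sigmoid_pos[of t] sigmoid_lt1[of t] by simp
lemma ds_le: "ds t \<le> sigmoid t" unfolding ds_def using sigmoid_pos[of t] sigmoid_lt1[of t]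
  by (simp add: mult_le_cancel_left1)
lemma dds_le: "\<bar>dds t\<bar> \<le> ds t" unfolding dds_def using sigmoid_pos[of t] sigmoid_lt1[of t] ds_pos[of t]
  by (simp add: abs_mult abs_le_iff mult_le_cancel_left1)

lemma DERIV_sigmoid: "(sigmoid has_real_derivative ds t) (at t)"
proof -
  have p: "1 + exp (-t) \<noteq> 0" by (smt (verit) exp_gt_zero)
  have "((\<lambda>t. 1 / (1 + exp (- t))) has_real_derivative
        - (- exp (-t)) / (1 + exp (-t))^2) (at t)"
    using p by (auto intro!: derivative_eq_intros simp: power2_eq_square)
  moreover have "- (- exp (-t)) / (1 + exp (-t))^2 = ds t"
    unfolding ds_def sigmoid_def using p by (simp add: field_simps power2_eq_square)
  ultimately show ?thesis unfolding sigmoid_def[abs_def] by simp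
qed

lemma DERIV_ds: "(ds has_real_derivative dds t) (at t)"
proof -
  have "((\<lambda>t. sigmoid t * (1 - sigmoid t)) has_real_derivative
        ds t * (1 - sigmoid t) + sigmoid t * (- ds t)) (at t)"
    by (auto intro!: derivative_eq_intros DERIV_sigmoid)
  moreover have "ds t * (1 - sigmoid t) + sigmoid t * (- ds t) = dds t"
    unfolding dds_def by (simp add: algebra_simps)
  ultimately show ?thesis unfolding ds_def[abs_def] by simp
qed



definition Fs :: "nat \<Rightarrow> nat \<Rightarrow> (nat \<Rightarrow> real) \<Rightarrow> real \<Rightarrow> (nat \<Rightarrow> real) \<Rightarrow> real" where
  "Fs m K x \<sigma> u = (1 / real K) * (\<Sum>k<K. sigmoid (\<sigma> * blk_inner m u x k))"
definition D1 :: "nat \<Rightarrow> nat \<Rightarrow> (nat \<Rightarrow> real) \<Rightarrow> real \<Rightarrow> nat \<Rightarrow> (nat \<Rightarrow> real) \<Rightarrow> real" where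
  "D1 m K x \<sigma> i u = (1 / real K) * (\<Sum>k<K. \<sigma> * ds (\<sigma> * blk_inner m u x k) * x (m*k+i))"
definition D2 :: "nat \<Rightarrow> nat \<Rightarrow> (nat \<Rightarrow> real) \<Rightarrow> real \<Rightarrow> nat \<Rightarrow> nat \<Rightarrow> (nat \<Rightarrow> real) \<Rightarrow> real" where
  "D2 m K x \<sigma> i j u = (1 / real K) * (\<Sum>k<K. \<sigma> * \<sigma> * dds (\<sigma> * blk_inner m u x k) * x (m*k+i) * x (m*k+j))"

lemma blk_upd:
  assumes "j < m"
  shows "blk_inner m (u(j:=t)) x k = blk_inner m u x k + (t - u j) * x (m*k+j)"
proof -
  have "(\<Sum>l<m. (u(j:=t)) l * x (m*k+l)) = (\<Sum>l<m. u l * x (m*k+l) + (if l = j then (t - u j) * x (m*k+l) else 0))"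
    by (intro sum.cong) (auto simp: algebra_simps)
  also have "\<dots> = (\<Sum>l<m. u l * x (m*k+l)) + (t - u j) * x (m*k+j)"
    using assms by (simp add: sum.distrib)
  finally show ?thesis unfolding blk_inner_def .
qed

lemma deriv_blk:
  assumes "j < m" and f: "\<And>z. (f has_real_derivative f' z) (at z)"
  shows "((\<lambda>t. f (\<sigma> * blk_inner m (u(j:=t)) x k)) has_real_derivative
           f' (\<sigma> * blk_inner m u x k) * (\<sigma> * x (m*k+j))) (at (u j))"
proof -
  have e: "(\<lambda>t. f (\<sigma> * blk_inner m (u(j:=t)) x k)) =
           (\<lambda>t. f (\<sigma> * (blk_inner m u x k + (t - u j) * x (m*k+j))))"
    using blk_upd[OF assms(1)] by simp
  have g: "((\<lambda>t. \<sigma> * (blk_inner m u x k + (t - u j) * x (m*k+j))) has_real_derivative \<sigma> * x (m*k+j)) (at (u j))"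
    by (auto intro!: derivative_eq_intros)
  show ?thesis unfolding e
    using DERIV_chain2[OF f g] by simp
qed

lemma DERIV_Fs:
  assumes "j < m"
  shows "((\<lambda>t. Fs m K x \<sigma> (u(j:=t))) has_real_derivative D1 m K x \<sigma> j u) (at (u j))"
proof -
  have "((\<lambda>t. \<Sum>k<K. sigmoid (\<sigma> * blk_inner m (u(j:=t)) x k)) has_real_derivative
        (\<Sum>k<K. ds (\<sigma> * blk_inner m u x k) * (\<sigma> * x (m*k+j)))) (at (u j))"
    by (rule DERIV_sum) (rule deriv_blk[OF assms DERIV_sigmoid])
  from DERIV_cmult[OF this, of "1 / real K"] show ?thesis
    unfolding Fs_def D1_def by (simp add: algebra_simps)
qed

lemma DERIV_D1:
  assumes "j < m"
  shows "((\<lambda>t. D1 m K x \<sigma> i (u(j:=t))) has_real_derivative D2 m K x \<sigma> i j u) (at (u j))"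
proof -
  have "((\<lambda>t. \<Sum>k<K. \<sigma> * x (m*k+i) * ds (\<sigma> * blk_inner m (u(j:=t)) x k)) has_real_derivative
        (\<Sum>k<K. \<sigma> * x (m*k+i) * (dds (\<sigma> * blk_inner m u x k) * (\<sigma> * x (m*k+j))))) (at (u j))"
    by (rule DERIV_sum) (rule DERIV_cmult, rule deriv_blk[OF assms DERIV_ds])
  from DERIV_cmult[OF this, of "1 / real K"] show ?thesis
    unfolding D2_def D1_def by (simp add: algebra_simps)
qed

lemma Fs_pos: "K \<ge> 1 \<Longrightarrow> 0 < Fs m K x \<sigma> u"
  unfolding Fs_def using sigmoid_pos
  by (intro mult_pos_pos) (auto intro!: sum_pos simp: lessThan_empty_iff)

lemma partial_lnF:
  assumes "i < m" "K \<ge> 1"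
  shows "partial i (\<lambda>u. - ln (Fs m K x \<sigma> u)) u = - D1 m K x \<sigma> i u / Fs m K x \<sigma> u"
proof -
  have "((\<lambda>t. - ln (Fs m K x \<sigma> (u(i:=t)))) has_real_derivative
        - (D1 m K x \<sigma> i u / Fs m K x \<sigma> u)) (at (u i))"
    using DERIV_Fs[OF assms(1)] Fs_pos[OF assms(2)]
    by (auto intro!: derivative_eq_intros simp: divide_simps)
  then show ?thesis unfolding partial_def by (simp add: DERIV_imp_deriv)
qed

lemma hess_lnF:
  assumes "i < m" "j < m" "K \<ge> 1"
  shows "hess (\<lambda>u. - ln (Fs m K x \<sigma> u)) w i j =
          - D2 m K x \<sigma> i j w / Fs m K x \<sigma> w + D1 m K x \<sigma> i w * D1 m K x \<sigma> j w / (Fs m K x \<sigma> w)^2"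
proof -
  have e: "(\<lambda>u. partial i (\<lambda>u. - ln (Fs m K x \<sigma> u)) u) = (\<lambda>u. - D1 m K x \<sigma> i u / Fs m K x \<sigma> u)"
    using partial_lnF[OF assms(1,3)] by auto
  have F: "Fs m K x \<sigma> w \<noteq> 0" using Fs_pos[OF assms(3)] by (metis less_irrefl)
  have "((\<lambda>t. - D1 m K x \<sigma> i (w(j:=t)) / Fs m K x \<sigma> (w(j:=t))) has_real_derivative
        (- D2 m K x \<sigma> i j w * Fs m K x \<sigma> w - (- D1 m K x \<sigma> i w) * D1 m K x \<sigma> j w) / (Fs m K x \<sigma> w * Fs m K x \<sigma> w)) (at (w j))"
    using DERIV_divide[OF DERIV_minus[OF DERIV_D1[OF assms(2), of K x \<sigma> i w]] DERIV_Fs[OF assms(2), of K x \<sigma> w]] F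
    by simp
  moreover have "(- D2 m K x \<sigma> i j w * Fs m K x \<sigma> w - (- D1 m K x \<sigma> i w) * D1 m K x \<sigma> j w) / (Fs m K x \<sigma> w * Fs m K x \<sigma> w)
     = - D2 m K x \<sigma> i j w / Fs m K x \<sigma> w + D1 m K x \<sigma> i w * D1 m K x \<sigma> j w / (Fs m K x \<sigma> w)^2"
    using F by (simp add: field_simps power2_eq_square)
  ultimately show ?thesis unfolding hess_def partial_def e
    by (simp add: DERIV_imp_deriv)
qed

lemma Hcnn_Fs: "Hcnn m K u x = Fs m K x 1 u"
  unfolding Hcnn_def Fs_def by simp

lemma one_minus_Hcnn: "K \<ge> 1 \<Longrightarrow> 1 - Hcnn m K u x = Fs m K x (-1) u"
  unfolding Hcnn_def Fs_def by (simp add: sigmoid_neg sum_subtractf field_simps)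

lemma loss_True: "loss m K u x True = - ln (Fs m K x 1 u)"
  unfolding loss_def Hcnn_Fs by simp

lemma loss_False: "K \<ge> 1 \<Longrightarrow> loss m K u x False = - ln (Fs m K x (-1) u)"
  unfolding loss_def using one_minus_Hcnn by simp

lemma loss_Fs: "K \<ge> 1 \<Longrightarrow> (\<lambda>u. loss m K u x y) = (\<lambda>u. - ln (Fs m K x (if y then 1 else -1) u))"
  by (cases y) (auto simp: loss_True loss_False)



lemma avg_bound:
  fixes t s c :: "nat \<Rightarrow> real"
  assumes "\<And>k. \<bar>t k\<bar> \<le> s k" "\<And>k. 0 \<le> s k"
  shows "\<bar>(1 / real K) * (\<Sum>k<K. t k * c k)\<bar> \<le> ((1 / real K) * (\<Sum>k<K. s k)) * (\<Sum>k<K. \<bar>c k\<bar>)"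
proof -
  have "\<bar>\<Sum>k<K. t k * c k\<bar> \<le> (\<Sum>k<K. \<bar>t k * c k\<bar>)" by (rule sum_abs)
  also have "\<dots> \<le> (\<Sum>k<K. (\<Sum>l<K. s l) * \<bar>c k\<bar>)"
  proof (rule sum_mono)
    fix k assume k: "k \<in> {..<K}"
    have "s k \<le> (\<Sum>l<K. s l)" using k assms(2) by (intro member_le_sum) auto
    then show "\<bar>t k * c k\<bar> \<le> (\<Sum>l<K. s l) * \<bar>c k\<bar>"
      using assms(1)[of k] by (simp add: abs_mult mult_right_mono order_trans)
  qed
  also have "\<dots> = (\<Sum>l<K. s l) * (\<Sum>k<K. \<bar>c k\<bar>)" by (simp add: sum_distrib_left)
  finally show ?thesis
    by (simp add: abs_mult divide_simps mult.assoc)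
qed

lemma cs_sum:
  fixes c :: "nat \<Rightarrow> real"
  shows "(\<Sum>k<K. c k)^2 \<le> real K * (\<Sum>k<K. (c k)^2)"
proof -
  have "(\<Sum>k<K. c k)^2 = (\<Sum>k<K. \<Sum>l<K. c k * c l)"
    by (simp add: power2_eq_square sum_product)
  also have "\<dots> \<le> (\<Sum>k<K. \<Sum>l<K. ((c k)^2 + (c l)^2) / 2)"
  proof (intro sum_mono)
    fix k l
    have "2 * c k * c l \<le> (c k)^2 + (c l)^2" by (rule sum_squares_bound)
    then show "c k * c l \<le> ((c k)^2 + (c l)^2) / 2" by simp
  qed
  also have "\<dots> = real K * (\<Sum>k<K. (c k)^2)"
    by (simp add: sum.distrib add_divide_distrib sum_divide_distrib[symmetric] sum_distrib_left[symmetric]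
                  sum.swap[of "\<lambda>k l. (c l)^2 / 2"] sum_constant)
  finally show ?thesis .
qed

definition Qf :: "nat \<Rightarrow> nat \<Rightarrow> (nat \<Rightarrow> real) \<Rightarrow> real \<Rightarrow> (nat \<Rightarrow> real) \<Rightarrow> (nat \<Rightarrow> real) \<Rightarrow> real" where
  "Qf m K x \<sigma> w v = (\<Sum>i<m. \<Sum>j<m. v i * (- D2 m K x \<sigma> i j w / Fs m K x \<sigma> w
        + D1 m K x \<sigma> i w * D1 m K x \<sigma> j w / (Fs m K x \<sigma> w)^2) * v j)"

lemma quad_D2:
  "(\<Sum>i<m. \<Sum>j<m. v i * D2 m K x \<sigma> i j w * v j) =
     (1 / real K) * (\<Sum>k<K. \<sigma> * \<sigma> * dds (\<sigma> * blk_inner m w x k) * (blk_inner m v x k)^2)"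
proof -
  have "(\<Sum>i<m. \<Sum>j<m. v i * D2 m K x \<sigma> i j w * v j) =
       (1 / real K) * (\<Sum>k<K. \<Sum>i<m. \<Sum>j<m. \<sigma> * \<sigma> * dds (\<sigma> * blk_inner m w x k) * (v i * x (m*k+i)) * (v j * x (m*k+j)))"
    unfolding D2_def
    by (simp add: sum_distrib_left sum_distrib_right sum.swap[of _ "{..<K}"] algebra_simps)
  also have "\<dots> = (1 / real K) * (\<Sum>k<K. \<sigma> * \<sigma> * dds (\<sigma> * blk_inner m w x k) * (blk_inner m v x k)^2)"
  proof -
    have "\<And>k. (\<Sum>i<m. \<Sum>j<m. \<sigma> * \<sigma> * dds (\<sigma> * blk_inner m w x k) * (v i * x (m*k+i)) * (v j * x (m*k+j)))
        = \<sigma> * \<sigma> * dds (\<sigma> * blk_inner m w x k) * (blk_inner m v x k)^2"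
      unfolding power2_eq_square blk_inner_def sum_product
      by (simp only: sum_distrib_left mult.assoc)
    then show ?thesis by simp
  qed
  finally show ?thesis .
qed

lemma lin_D1:
  "(\<Sum>i<m. v i * D1 m K x \<sigma> i w) =
     (1 / real K) * (\<Sum>k<K. \<sigma> * ds (\<sigma> * blk_inner m w x k) * blk_inner m v x k)"
  unfolding D1_def blk_inner_def
  by (simp add: sum_distrib_left sum_distrib_right sum.swap[of _ "{..<K}"] algebra_simps)

lemma Qf_eq:
  "Qf m K x \<sigma> w v = (\<Sum>i<m. v i * D1 m K x \<sigma> i w)^2 / (Fs m K x \<sigma> w)^2
     - (\<Sum>i<m. \<Sum>j<m. v i * D2 m K x \<sigma> i j w * v j) / Fs m K x \<sigma> w"
proof -
  have e: "\<And>i j. v i * (- D2 m K x \<sigma> i j w / Fs m K x \<sigma> w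
        + D1 m K x \<sigma> i w * D1 m K x \<sigma> j w / (Fs m K x \<sigma> w)^2) * v j
     = (v i * D1 m K x \<sigma> i w) * (v j * D1 m K x \<sigma> j w) / (Fs m K x \<sigma> w)^2
       - v i * D2 m K x \<sigma> i j w * v j / Fs m K x \<sigma> w"
    by (simp add: divide_inverse algebra_simps)
  show ?thesis
    unfolding Qf_def e sum_subtractf sum_divide_distrib[symmetric] by (simp only: power2_eq_square sum_product)
qed



lemma Fs_avg: "Fs m K x \<sigma> w = (1 / real K) * (\<Sum>k<K. sigmoid (\<sigma> * blk_inner m w x k))"
  by (simp add: Fs_def)

lemma sig_cases: "\<sigma> * \<sigma> = (1::real) \<Longrightarrow> \<sigma> = 1 \<or> \<sigma> = -1"
  using power2_eq_1_iff[of \<sigma>] by (simp add: power2_eq_square)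

lemma T2_bound:
  assumes "\<sigma> * \<sigma> = 1"
  shows "\<bar>(1 / real K) * (\<Sum>k<K. \<sigma> * \<sigma> * dds (\<sigma> * blk_inner m w x k) * c k)\<bar>
          \<le> Fs m K x \<sigma> w * (\<Sum>k<K. \<bar>c k\<bar>)"
  unfolding Fs_avg
proof (rule avg_bound)
  fix k
  have "\<bar>\<sigma> * \<sigma> * dds (\<sigma> * blk_inner m w x k)\<bar> = \<bar>dds (\<sigma> * blk_inner m w x k)\<bar>"
    using assms by simp
  also have "\<dots> \<le> sigmoid (\<sigma> * blk_inner m w x k)"
    using dds_le ds_le order_trans by blast
  finally show "\<bar>\<sigma> * \<sigma> * dds (\<sigma> * blk_inner m w x k)\<bar> \<le> sigmoid (\<sigma> * blk_inner m w x k)" .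
  show "0 \<le> sigmoid (\<sigma> * blk_inner m w x k)" using sigmoid_pos less_imp_le by blast
qed

lemma T1_bound:
  assumes "\<sigma> * \<sigma> = 1"
  shows "\<bar>(1 / real K) * (\<Sum>k<K. \<sigma> * ds (\<sigma> * blk_inner m w x k) * c k)\<bar>
          \<le> Fs m K x \<sigma> w * (\<Sum>k<K. \<bar>c k\<bar>)"
  unfolding Fs_avg
proof (rule avg_bound)
  fix k
  have a: "\<bar>\<sigma>\<bar> = 1" using sig_cases[OF assms] by auto
  have "\<bar>\<sigma> * ds (\<sigma> * blk_inner m w x k)\<bar> = \<bar>ds (\<sigma> * blk_inner m w x k)\<bar>"
    using a by (simp add: abs_mult)
  also have "\<dots> \<le> sigmoid (\<sigma> * blk_inner m w x k)"
    using ds_le ds_pos by (simp add: less_imp_le)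
  finally show "\<bar>\<sigma> * ds (\<sigma> * blk_inner m w x k)\<bar> \<le> sigmoid (\<sigma> * blk_inner m w x k)" .
  show "0 \<le> sigmoid (\<sigma> * blk_inner m w x k)" using sigmoid_pos less_imp_le by blast
qed

lemma frac_bound:
  fixes A F B :: real
  assumes "0 < F" "\<bar>A\<bar> \<le> F * B"
  shows "\<bar>A / F\<bar> \<le> B"
proof -
  have "\<bar>A / F\<bar> = \<bar>A\<bar> / F" using abs_divide[of A F] abs_of_pos[OF assms(1)] by simp
  also have "\<dots> \<le> B" using assms by (simp add: pos_divide_le_eq mult.commute)
  finally show ?thesis .
qed

lemma Qf_bound:
  assumes K: "K \<ge> 1" and s: "\<sigma> * \<sigma> = 1"
  shows "\<bar>Qf m K x \<sigma> w v\<bar> \<le> (real K + 1) * (\<Sum>k<K. (blk_inner m v x k)^2)"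
proof -
  define F where "F = Fs m K x \<sigma> w"
  define S where "S = (\<Sum>k<K. (blk_inner m v x k)^2)"
  have F: "0 < F" unfolding F_def using Fs_pos[OF K] .
  have T1: "\<bar>(\<Sum>i<m. v i * D1 m K x \<sigma> i w) / F\<bar> \<le> (\<Sum>k<K. \<bar>blk_inner m v x k\<bar>)"
    unfolding lin_D1 F_def by (rule frac_bound[OF Fs_pos[OF K] T1_bound[OF s]])
  have T2: "\<bar>(\<Sum>i<m. \<Sum>j<m. v i * D2 m K x \<sigma> i j w * v j) / F\<bar> \<le> S"
    unfolding quad_D2 F_def S_def using frac_bound[OF Fs_pos[OF K] T2_bound[OF s, of K m w x "\<lambda>k. (blk_inner m v x k)^2"]]
    by simp
  have cs: "(\<Sum>k<K. \<bar>blk_inner m v x k\<bar>)^2 \<le> real K * S"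
    using cs_sum[of "\<lambda>k. \<bar>blk_inner m v x k\<bar>" K] unfolding S_def by simp
  have "((\<Sum>i<m. v i * D1 m K x \<sigma> i w) / F)^2 \<le> (\<Sum>k<K. \<bar>blk_inner m v x k\<bar>)^2"
    using T1 by (metis abs_ge_zero power2_abs power_mono)
  then have T1': "(\<Sum>i<m. v i * D1 m K x \<sigma> i w)^2 / F^2 \<le> real K * S"
    using cs by (simp add: power_divide)
  have "\<bar>Qf m K x \<sigma> w v\<bar> \<le> (\<Sum>i<m. v i * D1 m K x \<sigma> i w)^2 / F^2
       + \<bar>(\<Sum>i<m. \<Sum>j<m. v i * D2 m K x \<sigma> i j w * v j) / F\<bar>"
  proof -
    have "0 \<le> (\<Sum>i<m. v i * D1 m K x \<sigma> i w)^2 / F^2" by simp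
    then show ?thesis unfolding Qf_eq F_def[symmetric]
      using abs_triangle_ineq4[of "(\<Sum>i<m. v i * D1 m K x \<sigma> i w)^2 / F^2"
         "(\<Sum>i<m. \<Sum>j<m. v i * D2 m K x \<sigma> i j w * v j) / F"] by linarith
  qed
  also have "\<dots> \<le> real K * S + S" using T1' T2 by simp
  finally show ?thesis unfolding S_def by (simp add: algebra_simps)
qed

definition hb :: "nat \<Rightarrow> nat \<Rightarrow> (nat \<Rightarrow> real) \<Rightarrow> nat \<Rightarrow> nat \<Rightarrow> real" where
  "hb m K x i j = (1 + 2 * real K) * (\<Sum>k<K. (x (m*k+i))^2 + (x (m*k+j))^2)"

lemma h_bound:
  assumes K: "K \<ge> 1" and s: "\<sigma> * \<sigma> = 1"
  shows "\<bar>- D2 m K x \<sigma> i j w / Fs m K x \<sigma> w + D1 m K x \<sigma> i w * D1 m K x \<sigma> j w / (Fs m K x \<sigma> w)^2\<bar>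
           \<le> hb m K x i j"
proof -
  define F where "F = Fs m K x \<sigma> w"
  have F: "0 < F" unfolding F_def using Fs_pos[OF K] .
  have A: "\<bar>D2 m K x \<sigma> i j w / F\<bar> \<le> (\<Sum>k<K. \<bar>x (m*k+i) * x (m*k+j)\<bar>)"
    unfolding F_def
    by (rule frac_bound[OF Fs_pos[OF K]], unfold D2_def)
       (use T2_bound[OF s, of K m w x "\<lambda>k. x (m*k+i) * x (m*k+j)"] in \<open>simp add: mult.assoc\<close>)
  have B: "\<And>i. \<bar>D1 m K x \<sigma> i w / F\<bar> \<le> (\<Sum>k<K. \<bar>x (m*k+i)\<bar>)"
    unfolding F_def
    by (rule frac_bound[OF Fs_pos[OF K]], unfold D1_def)
       (use T1_bound[OF s, of K m w x] in \<open>simp add: mult.assoc\<close>)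
  have prod: "\<bar>D1 m K x \<sigma> i w * D1 m K x \<sigma> j w / F^2\<bar> \<le> (\<Sum>k<K. \<bar>x (m*k+i)\<bar>) * (\<Sum>k<K. \<bar>x (m*k+j)\<bar>)"
  proof -
    have "\<bar>D1 m K x \<sigma> i w * D1 m K x \<sigma> j w / F^2\<bar> = \<bar>D1 m K x \<sigma> i w / F\<bar> * \<bar>D1 m K x \<sigma> j w / F\<bar>"
      by (simp add: power2_eq_square abs_mult)
    also have "\<dots> \<le> (\<Sum>k<K. \<bar>x (m*k+i)\<bar>) * (\<Sum>k<K. \<bar>x (m*k+j)\<bar>)"
      using B[of i] B[of j] by (intro mult_mono) auto
    finally show ?thesis .
  qed
  define c where "c k = \<bar>x (m*k+i)\<bar> + \<bar>x (m*k+j)\<bar>" for k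
  have p1: "(\<Sum>k<K. \<bar>x (m*k+i) * x (m*k+j)\<bar>) \<le> (\<Sum>k<K. (x (m*k+i))^2 + (x (m*k+j))^2)"
  proof (rule sum_mono)
    fix k
    have "2 * \<bar>x (m*k+i)\<bar> * \<bar>x (m*k+j)\<bar> \<le> \<bar>x (m*k+i)\<bar>^2 + \<bar>x (m*k+j)\<bar>^2" by (rule sum_squares_bound)
    moreover have "0 \<le> \<bar>x (m*k+i)\<bar> * \<bar>x (m*k+j)\<bar>" by simp
    ultimately show "\<bar>x (m*k+i) * x (m*k+j)\<bar> \<le> (x (m*k+i))^2 + (x (m*k+j))^2"
      unfolding abs_mult by (simp only: power2_abs)
  qed
  have p2: "(\<Sum>k<K. \<bar>x (m*k+i)\<bar>) * (\<Sum>k<K. \<bar>x (m*k+j)\<bar>) \<le> 2 * real K * (\<Sum>k<K. (x (m*k+i))^2 + (x (m*k+j))^2)"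
  proof -
    have "(\<Sum>k<K. \<bar>x (m*k+i)\<bar>) * (\<Sum>k<K. \<bar>x (m*k+j)\<bar>) \<le> (\<Sum>k<K. c k)^2"
    proof -
      have "(\<Sum>k<K. \<bar>x (m*k+i)\<bar>) \<le> (\<Sum>k<K. c k)" "(\<Sum>k<K. \<bar>x (m*k+j)\<bar>) \<le> (\<Sum>k<K. c k)"
        unfolding c_def by (auto intro!: sum_mono)
      then show ?thesis unfolding power2_eq_square by (intro mult_mono) (auto intro!: sum_nonneg simp: c_def)
    qed
    also have "\<dots> \<le> real K * (\<Sum>k<K. (c k)^2)" by (rule cs_sum)
    also have "\<dots> \<le> real K * (\<Sum>k<K. 2 * ((x (m*k+i))^2 + (x (m*k+j))^2))"
    proof (intro mult_left_mono sum_mono)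
      fix k
      have "2 * \<bar>x (m*k+i)\<bar> * \<bar>x (m*k+j)\<bar> \<le> \<bar>x (m*k+i)\<bar>^2 + \<bar>x (m*k+j)\<bar>^2" by (rule sum_squares_bound)
      then show "(c k)^2 \<le> 2 * ((x (m*k+i))^2 + (x (m*k+j))^2)"
        unfolding c_def by (simp add: power2_sum)
    qed simp
    also have "\<dots> = 2 * real K * (\<Sum>k<K. (x (m*k+i))^2 + (x (m*k+j))^2)"
      by (simp only: sum_distrib_left[symmetric] mult_ac)
    finally show ?thesis .
  qed
  have "\<bar>- D2 m K x \<sigma> i j w / F + D1 m K x \<sigma> i w * D1 m K x \<sigma> j w / F^2\<bar>
        \<le> \<bar>D2 m K x \<sigma> i j w / F\<bar> + \<bar>D1 m K x \<sigma> i w * D1 m K x \<sigma> j w / F^2\<bar>"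
    using abs_triangle_ineq[of "- D2 m K x \<sigma> i j w / F" "D1 m K x \<sigma> i w * D1 m K x \<sigma> j w / F^2"]
    by (simp only: abs_minus_cancel minus_divide_left)
  also have "\<dots> \<le> hb m K x i j"
    using A prod p1 p2 unfolding hb_def by (simp add: algebra_simps)
  finally show ?thesis unfolding F_def .
qed



lemma prob_std_gauss: "prob_space std_gauss"
  unfolding std_gauss_def by (rule prob_space_normal_density) simp

lemma sets_std_gauss[simp]: "sets std_gauss = sets borel"
  unfolding std_gauss_def by simp

lemma space_std_gauss[simp]: "space std_gauss = UNIV"
  unfolding std_gauss_def by simp

lemma meas_std_gauss[simp]: "measurable std_gauss N = measurable borel N"
  by (rule measurable_cong_sets) simp_all

lemma comp_meas_t: "a < n \<Longrightarrow> (\<lambda>x. x a) \<in> borel_measurable (gauss_vec n)"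
proof -
  assume True: "a < n"
  have "(\<lambda>x. x a) \<in> measurable (gauss_vec n) std_gauss"
    unfolding gauss_vec_def using True by (intro measurable_component_singleton) auto
  moreover have "measurable (gauss_vec n) std_gauss = measurable (gauss_vec n) borel"
    by (rule measurable_cong_sets) simp_all
  ultimately show ?thesis by simp
qed

lemma comp_meas_f: "\<not> a < n \<Longrightarrow> (\<lambda>x. x a) \<in> borel_measurable (gauss_vec n)"
proof -
  assume False: "\<not> a < n"
  have e: "\<And>x. x \<in> space (gauss_vec n) \<Longrightarrow> x a = undefined"
  proof -
    fix x assume "x \<in> space (gauss_vec n)"
    then have "x \<in> (\<Pi>\<^sub>E i\<in>{..<n}. space std_gauss)" unfolding gauss_vec_def space_PiM .
    moreover have "a \<notin> {..<n}" using False by simp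
    ultimately show "x a = undefined" by (rule PiE_arb)
  qed
  have "(\<lambda>_. undefined::real) \<in> borel_measurable (gauss_vec n)" by simp
  moreover have "((\<lambda>x. x a) \<in> borel_measurable (gauss_vec n)) = ((\<lambda>_. undefined::real) \<in> borel_measurable (gauss_vec n))"
    by (rule measurable_cong) (rule e)
  ultimately show ?thesis by simp
qed
lemma comp_meas[measurable]: "(\<lambda>x. x a) \<in> borel_measurable (gauss_vec n)"
  using comp_meas_t comp_meas_f by blast

lemma sigmoid_meas[measurable]: "sigmoid \<in> borel_measurable borel"
  unfolding sigmoid_def[abs_def] by measurable
lemma ds_meas[measurable]: "ds \<in> borel_measurable borel"
  unfolding ds_def[abs_def] by measurable
lemma dds_meas[measurable]: "dds \<in> borel_measurable borel"
  unfolding dds_def[abs_def] by measurable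

lemma blk_meas[measurable]: "(\<lambda>x. blk_inner m u x k) \<in> borel_measurable (gauss_vec n)"
  unfolding blk_inner_def by measurable
lemma Fs_meas[measurable]: "(\<lambda>x. Fs m K x \<sigma> w) \<in> borel_measurable (gauss_vec n)"
  unfolding Fs_def by measurable
lemma D1_meas[measurable]: "(\<lambda>x. D1 m K x \<sigma> i w) \<in> borel_measurable (gauss_vec n)"
  unfolding D1_def by measurable
lemma D2_meas[measurable]: "(\<lambda>x. D2 m K x \<sigma> i j w) \<in> borel_measurable (gauss_vec n)"
  unfolding D2_def by measurable

lemma std_density_one: "(\<integral>\<^sup>+t. ennreal (std_normal_density t) \<partial>lborel) = 1"
proof -
  have i: "integrable lborel (normal_density 0 1)"
    by (rule integrable_normal_density[where \<sigma>=1 and \<mu>=0]) simp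
  have "(\<integral>x. normal_density 0 1 x \<partial>lborel) = 1"
    by (rule integral_normal_density[where \<sigma>=1 and \<mu>=0]) simp
  then show ?thesis using nn_integral_eq_integral[OF i] by simp
qed

lemma mgf_std: "(\<integral>\<^sup>+t. ennreal (exp (c * t)) \<partial>std_gauss) = ennreal (exp (c^2/2))"
proof -
  have pt: "std_normal_density t * exp (c*t) = exp (c^2/2) * std_normal_density (-c + 1 * t)" for t
  proof -
    have "exp (- t\<^sup>2 / 2) * exp (c * t) = exp (c^2/2) * exp (- (-c + 1 * t)\<^sup>2 / 2)"
      unfolding mult_exp_exp by (rule arg_cong[where f=exp]) (simp add: power2_eq_square field_simps)
    then show ?thesis unfolding std_normal_density_def by simp
  qed
  have "(\<integral>\<^sup>+t. ennreal (exp (c * t)) \<partial>std_gauss) =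
        (\<integral>\<^sup>+t. ennreal (std_normal_density t) * ennreal (exp (c * t)) \<partial>lborel)"
    unfolding std_gauss_def by (simp add: nn_integral_density)
  also have "\<dots> = (\<integral>\<^sup>+t. ennreal (exp (c^2/2)) * ennreal (std_normal_density (-c + 1 * t)) \<partial>lborel)"
    by (intro nn_integral_cong) (simp add: ennreal_mult'[symmetric] pt)
  also have "\<dots> = ennreal (exp (c^2/2)) * (\<integral>\<^sup>+t. ennreal (std_normal_density (-c + 1 * t)) \<partial>lborel)"
    by (simp add: nn_integral_cmult)
  also have "(\<integral>\<^sup>+t. ennreal (std_normal_density (-c + 1 * t)) \<partial>lborel) = 1"
    using nn_integral_real_affine[of "\<lambda>x. ennreal (std_normal_density x)" 1 "-c"] std_density_one
    by simp
  finally show ?thesis by simp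
qed

lemma ps_gauss: "product_sigma_finite (\<lambda>_. std_gauss)"
  unfolding product_sigma_finite_def
  using prob_space_imp_sigma_finite[OF prob_std_gauss] by simp

lemma blk_reindex:
  fixes k K m :: nat
  assumes "k < K"
  shows "(\<Sum>a<m*K. (if m*k \<le> a \<and> a < m*k+m then g a else 0)) = (\<Sum>i<m. g (m*k+i))"
proof -
  have "k + 1 \<le> K" using assms by simp
  then have "m*(k+1) \<le> m*K" by (rule mult_le_mono2)
  then have le: "m*k+m \<le> m*K" by simp
  have "(\<Sum>a<m*K. (if m*k \<le> a \<and> a < m*k+m then g a else 0)) = (\<Sum>a\<in>{a\<in>{..<m*K}. m*k \<le> a \<and> a < m*k+m}. g a)"
    using sum.inter_filter[of "{..<m*K}" g "\<lambda>a. m*k \<le> a \<and> a < m*k+m"] by simp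
  also have "{a\<in>{..<m*K}. m*k \<le> a \<and> a < m*k+m} = (\<lambda>i. m*k+i) ` {..<m}"
  proof
    show "{a\<in>{..<m*K}. m*k \<le> a \<and> a < m*k+m} \<subseteq> (\<lambda>i. m*k+i) ` {..<m}"
    proof
      fix a assume a: "a \<in> {a\<in>{..<m*K}. m*k \<le> a \<and> a < m*k+m}"
      then have "a = m*k + (a - m*k)" "a - m*k < m" by auto
      then show "a \<in> (\<lambda>i. m*k+i) ` {..<m}" by (metis image_eqI lessThan_iff)
    qed
    show "(\<lambda>i. m*k+i) ` {..<m} \<subseteq> {a\<in>{..<m*K}. m*k \<le> a \<and> a < m*k+m}"
      using le by auto
  qed
  also have "(\<Sum>a\<in>(\<lambda>i. m*k+i) ` {..<m}. g a) = (\<Sum>i<m. g (m*k+i))"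
    by (subst sum.reindex) (auto simp: inj_on_def)
  finally show ?thesis .
qed



lemma mgf_blk:
  assumes k: "k < K"
  shows "(\<integral>\<^sup>+x. ennreal (exp (l * blk_inner m v x k)) \<partial>gauss_vec (m*K)) = ennreal (exp (l^2/2 * (\<Sum>i<m. (v i)^2)))"
proof -
  interpret ps: product_sigma_finite "\<lambda>_. std_gauss" by (rule ps_gauss)
  define c where "c a = (if m*k \<le> a \<and> a < m*k+m then v (a - m*k) else 0)" for a
  have b: "blk_inner m v x k = (\<Sum>a<m*K. c a * x a)" for x
  proof -
    have "(\<Sum>a<m*K. c a * x a) = (\<Sum>a<m*K. if m*k \<le> a \<and> a < m*k+m then v (a - m*k) * x a else 0)"
      by (rule sum.cong) (auto simp: c_def)
    then show ?thesis unfolding blk_inner_def blk_reindex[OF k] by simp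
  qed
  have "(\<integral>\<^sup>+x. ennreal (exp (l * blk_inner m v x k)) \<partial>gauss_vec (m*K)) =
        (\<integral>\<^sup>+x. (\<Prod>a<m*K. ennreal (exp (l * c a * x a))) \<partial>Pi\<^sub>M {..<m*K} (\<lambda>_. std_gauss))"
    unfolding gauss_vec_def b
    by (simp add: sum_distrib_left exp_sum prod_ennreal mult.assoc)
  also have "\<dots> = (\<Prod>a<m*K. (\<integral>\<^sup>+t. ennreal (exp (l * c a * t)) \<partial>std_gauss))"
    by (rule ps.product_nn_integral_prod) auto
  also have "\<dots> = (\<Prod>a<m*K. ennreal (exp ((l * c a)^2/2)))"
    using mgf_std by simp
  also have "\<dots> = ennreal (exp (\<Sum>a<m*K. (l * c a)^2/2))"
    by (simp add: prod_ennreal exp_sum)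
  also have "(\<Sum>a<m*K. (l * c a)^2/2) = (\<Sum>a<m*K. if m*k \<le> a \<and> a < m*k+m then (l * v (a - m*k))^2/2 else 0)"
    by (rule sum.cong) (auto simp: c_def)
  also have "\<dots> = l^2/2 * (\<Sum>i<m. (v i)^2)"
    unfolding blk_reindex[OF k] by (simp add: sum_distrib_left power_mult_distrib)
  finally show ?thesis .
qed



lemma pt_bound:
  fixes q a :: real
  assumes q: "0 < q"
  shows "\<bar>a\<bar> powr q \<le> q powr (q/2) * exp (-q) * (exp (sqrt q * a) + exp (- sqrt q * a))"
proof (cases "a = 0")
  case True
  have "0 \<le> q powr (q/2) * exp (-q) * (exp (sqrt q * a) + exp (- sqrt q * a))"
    by (intro mult_nonneg_nonneg add_nonneg_nonneg) auto
  then show ?thesis using True by simp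
next
  case False
  define y where "y = \<bar>a\<bar> / sqrt q"
  have sq: "sqrt q > 0" using q by simp
  have y: "y > 0" using False sq unfolding y_def by simp
  have ay: "\<bar>a\<bar> = y * sqrt q" unfolding y_def using sq by simp
  have ln_a: "ln \<bar>a\<bar> = ln y + ln q / 2"
    unfolding ay using y sq q by (simp add: ln_mult ln_sqrt)
  have qy: "q * y = sqrt q * \<bar>a\<bar>"
  proof -
    have "q = sqrt q * sqrt q" using q by simp
    then show ?thesis unfolding ay by (metis mult.assoc mult.commute)
  qed
  have "q * ln y \<le> q * (y - 1)"
    using ln_le_minus_one[OF y] q by (intro mult_left_mono) auto
  then have key: "q * ln \<bar>a\<bar> \<le> q/2 * ln q - q + sqrt q * \<bar>a\<bar>"
    using ln_a qy by (simp add: algebra_simps)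
  have "\<bar>a\<bar> powr q = exp (q * ln \<bar>a\<bar>)" using False by (simp add: powr_def mult.commute)
  also have "\<dots> \<le> exp (q/2 * ln q - q + sqrt q * \<bar>a\<bar>)" using key by simp
  also have "\<dots> = q powr (q/2) * exp (-q) * exp (sqrt q * \<bar>a\<bar>)"
  proof -
    have "q powr (q/2) = exp (q/2 * ln q)" using q by (simp add: powr_def)
    then show ?thesis by (simp only: mult_exp_exp) simp
  qed
  also have "\<dots> \<le> q powr (q/2) * exp (-q) * (exp (sqrt q * a) + exp (- sqrt q * a))"
  proof (rule mult_left_mono)
    show "exp (sqrt q * \<bar>a\<bar>) \<le> exp (sqrt q * a) + exp (- sqrt q * a)"
      by (cases "a \<ge> 0") (auto simp: add_increasing add_increasing2 less_imp_le)
  qed simp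
  finally show ?thesis .
qed

lemma mom_blk:
  assumes k: "k < K" and q: "0 < q" and v: "(\<Sum>i<m. (v i)^2) = 1"
  shows "(\<integral>\<^sup>+x. ennreal (\<bar>blk_inner m v x k\<bar> powr q) \<partial>gauss_vec (m*K)) \<le> ennreal (2 * q powr (q/2))"
proof -
  define A where "A = q powr (q/2) * exp (-q)"
  have A: "0 \<le> A" unfolding A_def by simp
  define E1 where "E1 x = exp (sqrt q * blk_inner m v x k)" for x
  define E2 where "E2 x = exp (- sqrt q * blk_inner m v x k)" for x
  have m1[measurable]: "(\<lambda>x. ennreal (E1 x)) \<in> borel_measurable (gauss_vec (m*K))"
    unfolding E1_def by measurable
  have m2[measurable]: "(\<lambda>x. ennreal (E2 x)) \<in> borel_measurable (gauss_vec (m*K))"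
    unfolding E2_def by measurable
  have "(\<integral>\<^sup>+x. ennreal (\<bar>blk_inner m v x k\<bar> powr q) \<partial>gauss_vec (m*K)) \<le>
        (\<integral>\<^sup>+x. ennreal A * (ennreal (E1 x) + ennreal (E2 x)) \<partial>gauss_vec (m*K))"
  proof (rule nn_integral_mono)
    fix x
    have "\<bar>blk_inner m v x k\<bar> powr q \<le> A * (E1 x + E2 x)"
      unfolding A_def E1_def E2_def by (rule pt_bound[OF q])
    then have "ennreal (\<bar>blk_inner m v x k\<bar> powr q) \<le> ennreal (A * (E1 x + E2 x))"
      by (rule ennreal_leI)
    also have "\<dots> = ennreal A * (ennreal (E1 x) + ennreal (E2 x))"
      using A unfolding E1_def E2_def by (simp add: ennreal_mult ennreal_plus)
    finally show "ennreal (\<bar>blk_inner m v x k\<bar> powr q) \<le> ennreal A * (ennreal (E1 x) + ennreal (E2 x))" .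
  qed
  also have "\<dots> = ennreal A * ((\<integral>\<^sup>+x. ennreal (E1 x) \<partial>gauss_vec (m*K)) + (\<integral>\<^sup>+x. ennreal (E2 x) \<partial>gauss_vec (m*K)))"
    by (simp add: nn_integral_cmult nn_integral_add)
  also have "(\<integral>\<^sup>+x. ennreal (E1 x) \<partial>gauss_vec (m*K)) = ennreal (exp (q/2))"
    unfolding E1_def mgf_blk[OF k] v using q by simp
  also have "(\<integral>\<^sup>+x. ennreal (E2 x) \<partial>gauss_vec (m*K)) = ennreal (exp (q/2))"
    unfolding E2_def mgf_blk[OF k] v using q by simp
  also have "ennreal A * (ennreal (exp (q/2)) + ennreal (exp (q/2))) = ennreal (A * (exp (q/2) + exp (q/2)))"
    using A by (simp add: ennreal_plus[symmetric] ennreal_mult[symmetric] del: ennreal_plus)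
  also have "\<dots> \<le> ennreal (2 * q powr (q/2))"
  proof (rule ennreal_leI)
    have "A * (exp (q/2) + exp (q/2)) = 2 * q powr (q/2) * exp (- (q/2))"
    proof -
      have "exp (- q) * exp (q / 2) = exp (- (q / 2))" by (simp only: mult_exp_exp) simp
      then show ?thesis unfolding A_def by (simp add: algebra_simps)
    qed
    also have "\<dots> \<le> 2 * q powr (q/2) * 1"
      using q by (intro mult_left_mono) auto
    finally show "A * (exp (q/2) + exp (q/2)) \<le> 2 * q powr (q/2)" by simp
  qed
  finally show ?thesis .
qed



lemma Hcnn_meas[measurable]: "(\<lambda>x. Hcnn m K w x) \<in> borel_measurable (gauss_vec n)"
  unfolding Hcnn_def by measurable

lemma Hcnn_bounds: "K \<ge> 1 \<Longrightarrow> 0 \<le> Hcnn m K w x \<and> Hcnn m K w x \<le> 1"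
  using Fs_pos[of K m x 1 w] Fs_pos[of K m x "-1" w] one_minus_Hcnn[of K m w x] Hcnn_Fs[of m K w x]
  by auto

lemma vnorm_one: "vnorm m v = 1 \<Longrightarrow> (\<Sum>i<m. (v i)^2) = 1"
  unfolding vnorm_def by simp

lemma prob_gauss_vec: "prob_space (gauss_vec n)"
  unfolding gauss_vec_def by (rule prob_space_PiM) (rule prob_std_gauss)

lemma sets_data[simp]: "sets (data_measure m K wstar) = sets (gauss_vec (m*K) \<Otimes>\<^sub>M count_space UNIV)"
  unfolding data_measure_def by simp

lemma meas_data[simp]: "measurable (data_measure m K wstar) N = measurable (gauss_vec (m*K) \<Otimes>\<^sub>M count_space UNIV) N"
  by (rule measurable_cong_sets) simp_all

lemma data_int:
  assumes K: "K \<ge> 1" and B[measurable]: "B \<in> borel_measurable (gauss_vec (m*K))"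
  shows "(\<integral>\<^sup>+z. ennreal (B (fst z)) \<partial>data_measure m K wstar) \<le> 2 * (\<integral>\<^sup>+x. ennreal (B x) \<partial>gauss_vec (m*K))"
proof -
  let ?G = "gauss_vec (m*K)" and ?C = "count_space (UNIV::bool set)"
  let ?d = "\<lambda>(x, y). ennreal (if y then Hcnn m K wstar x else 1 - Hcnn m K wstar x)"
  have dm: "?d \<in> borel_measurable (?G \<Otimes>\<^sub>M ?C)" by measurable
  interpret C: sigma_finite_measure ?C by (rule sigma_finite_measure_count_space_finite) simp
  have "(\<integral>\<^sup>+z. ennreal (B (fst z)) \<partial>data_measure m K wstar) = (\<integral>\<^sup>+z. ?d z * ennreal (B (fst z)) \<partial>(?G \<Otimes>\<^sub>M ?C))"
    unfolding data_measure_def by (rule nn_integral_density[OF dm]) measurable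
  also have "\<dots> \<le> (\<integral>\<^sup>+z. ennreal (B (fst z)) \<partial>(?G \<Otimes>\<^sub>M ?C))"
  proof (rule nn_integral_mono)
    fix z :: "(nat \<Rightarrow> real) \<times> bool"
    have "?d z \<le> 1" using Hcnn_bounds[OF K, of m wstar "fst z"]
      by (cases z) (auto simp: ennreal_le_1)
    then show "?d z * ennreal (B (fst z)) \<le> ennreal (B (fst z))"
      using mult_right_mono[of "?d z" 1 "ennreal (B (fst z))"] by simp
  qed
  also have "\<dots> = (\<integral>\<^sup>+x. \<integral>\<^sup>+y. ennreal (B (fst (x, y))) \<partial>?C \<partial>?G)"
    by (rule C.nn_integral_fst[symmetric]) measurable
  also have "\<dots> = (\<integral>\<^sup>+x. 2 * ennreal (B x) \<partial>?G)"
  proof (rule nn_integral_cong)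
    fix x
    have "UNIV = {True, False}" by auto
    then show "(\<integral>\<^sup>+y. ennreal (B (fst (x, y))) \<partial>?C) = 2 * ennreal (B x)"
      by (simp add: nn_integral_count_space_finite mult_2 mult.commute[of _ 2])
  qed
  also have "\<dots> = 2 * (\<integral>\<^sup>+x. ennreal (B x) \<partial>?G)"
    by (rule nn_integral_cmult) measurable
  finally show ?thesis .
qed



definition sg :: "bool \<Rightarrow> real" where "sg y = (if y then 1 else -1)"

lemma sg_sq: "sg y * sg y = 1" unfolding sg_def by simp

definition hh :: "nat \<Rightarrow> nat \<Rightarrow> (nat \<Rightarrow> real) \<Rightarrow> real \<Rightarrow> (nat \<Rightarrow> real) \<Rightarrow> nat \<Rightarrow> nat \<Rightarrow> real" where
  "hh m K x \<sigma> w i j = - D2 m K x \<sigma> i j w / Fs m K x \<sigma> w + D1 m K x \<sigma> i w * D1 m K x \<sigma> j w / (Fs m K x \<sigma> w)^2"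

lemma hh_meas[measurable]: "(\<lambda>x. hh m K x \<sigma> w i j) \<in> borel_measurable (gauss_vec n)"
  unfolding hh_def by measurable

lemma Qf_meas[measurable]: "(\<lambda>x. Qf m K x \<sigma> w v) \<in> borel_measurable (gauss_vec n)"
  unfolding Qf_def by measurable

lemma hess_data:
  assumes "K \<ge> 1" "i < m" "j < m"
  shows "hess (\<lambda>u. loss m K u x y) w i j = hh m K x (sg y) w i j"
  unfolding loss_Fs[OF assms(1)] hh_def hess_lnF[OF assms(2,3,1)] sg_def by simp

definition hz :: "nat \<Rightarrow> nat \<Rightarrow> (nat \<Rightarrow> real) \<Rightarrow> nat \<Rightarrow> nat \<Rightarrow> (nat \<Rightarrow> real) \<times> bool \<Rightarrow> real" where
  "hz m K w i j z = (if snd z then hh m K (fst z) 1 w i j else hh m K (fst z) (-1) w i j)"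

lemma hz_eq: "hz m K w i j z = hh m K (fst z) (sg (snd z)) w i j"
  unfolding hz_def sg_def by simp

lemma hz_meas: "hz m K w i j \<in> borel_measurable (data_measure m K wstar)"
  unfolding hz_def by simp measurable

definition Qz :: "nat \<Rightarrow> nat \<Rightarrow> (nat \<Rightarrow> real) \<Rightarrow> (nat \<Rightarrow> real) \<Rightarrow> (nat \<Rightarrow> real) \<times> bool \<Rightarrow> real" where
  "Qz m K w v z = (if snd z then Qf m K (fst z) 1 w v else Qf m K (fst z) (-1) w v)"

lemma Qz_eq: "Qz m K w v z = Qf m K (fst z) (sg (snd z)) w v"
  unfolding Qz_def sg_def by simp

lemma Qz_meas: "Qz m K w v \<in> borel_measurable (data_measure m K wstar)"
  unfolding Qz_def by simp measurable

lemma sq_blk: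
  assumes "k < K" "(\<Sum>i<m. (v i)^2) = 1"
  shows "(\<integral>\<^sup>+x. ennreal ((blk_inner m v x k)^2) \<partial>gauss_vec (m*K)) \<le> 4"
proof -
  have "(\<integral>\<^sup>+x. ennreal (\<bar>blk_inner m v x k\<bar> powr 2) \<partial>gauss_vec (m*K)) \<le> ennreal (2 * 2 powr (2/2))"
    by (rule mom_blk[OF assms(1) _ assms(2)]) simp
  then show ?thesis by simp
qed

lemma sq_coord:
  assumes "k < K" "i < m"
  shows "(\<integral>\<^sup>+x. ennreal ((x (m*k+i))^2) \<partial>gauss_vec (m*K)) \<le> 4"
proof -
  let ?e = "\<lambda>l. if l = i then 1 else 0::real"
  have b: "blk_inner m ?e x k = x (m*k+i)" for x
  proof -
    have "(\<Sum>l<m. ?e l * x (m*k+l)) = (\<Sum>l<m. if l = i then x (m*k+i) else 0)"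
      by (rule sum.cong) auto
    then show ?thesis unfolding blk_inner_def using assms(2) by simp
  qed
  have "(\<Sum>l<m. (?e l)^2) = (\<Sum>l<m. if l = i then 1 else 0)"
    by (rule sum.cong) auto
  then have "(\<Sum>l<m. (?e l)^2) = 1" using assms(2) by simp
  from sq_blk[OF assms(1) this] show ?thesis unfolding b .
qed

lemma hb_int:
  assumes K: "K \<ge> 1" and "i < m" "j < m"
  shows "(\<integral>\<^sup>+x. ennreal (hb m K x i j) \<partial>gauss_vec (m*K)) \<le> ennreal ((1 + 2 * real K) * (8 * real K))"
proof -
  have pt: "ennreal (hb m K x i j) = ennreal (1 + 2 * real K) * (\<Sum>k<K. ennreal ((x (m*k+i))^2) + ennreal ((x (m*k+j))^2))" for x
  proof -
    have "ennreal (hb m K x i j) = ennreal (1 + 2 * real K) * ennreal (\<Sum>k<K. (x (m*k+i))^2 + (x (m*k+j))^2)"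
      unfolding hb_def by (rule ennreal_mult) (auto intro!: sum_nonneg)
    also have "ennreal (\<Sum>k<K. (x (m*k+i))^2 + (x (m*k+j))^2) = (\<Sum>k<K. ennreal ((x (m*k+i))^2 + (x (m*k+j))^2))"
      by (rule sum_ennreal[symmetric]) simp
    also have "\<dots> = (\<Sum>k<K. ennreal ((x (m*k+i))^2) + ennreal ((x (m*k+j))^2))"
      by (intro sum.cong refl) (simp add: ennreal_plus)
    finally show ?thesis .
  qed
  have "(\<integral>\<^sup>+x. ennreal (hb m K x i j) \<partial>gauss_vec (m*K)) =
        (\<integral>\<^sup>+x. ennreal (1 + 2 * real K) * (\<Sum>k<K. ennreal ((x (m*k+i))^2) + ennreal ((x (m*k+j))^2)) \<partial>gauss_vec (m*K))"
    unfolding pt ..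
  also have "\<dots> = ennreal (1 + 2 * real K) * (\<Sum>k<K. (\<integral>\<^sup>+x. ennreal ((x (m*k+i))^2) \<partial>gauss_vec (m*K))
        + (\<integral>\<^sup>+x. ennreal ((x (m*k+j))^2) \<partial>gauss_vec (m*K)))"
    by (simp add: nn_integral_cmult nn_integral_sum nn_integral_add)
  also have "\<dots> \<le> ennreal (1 + 2 * real K) * (\<Sum>k<K. 4 + 4)"
    using sq_coord assms by (intro mult_left_mono sum_mono add_mono) auto
  also have "\<dots> = ennreal ((1 + 2 * real K) * (8 * real K))"
    by (simp add: ennreal_mult ennreal_of_nat_eq_real_of_nat[symmetric] mult.commute)
  finally show ?thesis .
qed

lemma hh_bound: "K \<ge> 1 \<Longrightarrow> \<sigma> * \<sigma> = 1 \<Longrightarrow> \<bar>hh m K x \<sigma> w i j\<bar> \<le> hb m K x i j"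
  unfolding hh_def by (rule h_bound)

lemma integrable_h:
  assumes K: "K \<ge> 1" and ij: "i < m" "j < m"
  shows "integrable (data_measure m K wstar) (\<lambda>(x, y). hess (\<lambda>u. loss m K u x y) w i j)"
proof -
  have e: "(\<lambda>(x, y). hess (\<lambda>u. loss m K u x y) w i j) = hz m K w i j"
    using hess_data[OF K ij] by (auto simp: hz_eq)
  have "(\<integral>\<^sup>+z. ennreal (norm (hz m K w i j z)) \<partial>data_measure m K wstar) \<le>
        (\<integral>\<^sup>+z. ennreal (hb m K (fst z) i j) \<partial>data_measure m K wstar)"
  proof (intro nn_integral_mono ennreal_leI)
    fix z show "norm (hz m K w i j z) \<le> hb m K (fst z) i j"
      unfolding hz_eq real_norm_def by (rule hh_bound[OF K sg_sq])
  qed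
  also have "\<dots> \<le> 2 * (\<integral>\<^sup>+x. ennreal (hb m K x i j) \<partial>gauss_vec (m*K))"
    by (rule data_int[OF K]) (unfold hb_def, measurable)
  also have "\<dots> \<le> 2 * ennreal ((1 + 2 * real K) * (8 * real K))"
    by (intro mult_left_mono hb_int[OF K ij]) simp
  also have "\<dots> < \<infinity>" by (simp add: ennreal_mult_less_top)
  finally show ?thesis unfolding e by (intro integrableI_bounded hz_meas)
qed



definition EQ :: "nat \<Rightarrow> nat \<Rightarrow> (nat \<Rightarrow> real) \<Rightarrow> (nat \<Rightarrow> real) \<Rightarrow> (nat \<Rightarrow> real) \<Rightarrow> real" where
  "EQ m K wstar w v = (\<Sum>i<m. \<Sum>j<m. v i * exp_hess m K wstar w i j * v j)"

lemma Qz_sum: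
  assumes K: "K \<ge> 1"
  shows "Qz m K w v z = (\<Sum>i<m. \<Sum>j<m. v i * (case z of (x, y) \<Rightarrow> hess (\<lambda>u. loss m K u x y) w i j) * v j)"
proof -
  obtain x y where z: "z = (x, y)" by (cases z)
  show ?thesis unfolding z Qz_eq Qf_def
    by (intro sum.cong refl) (simp add: hess_data[OF K] hh_def)
qed

lemma G_decomp:
  assumes K: "K \<ge> 1"
  shows "Gvar m K wstar w v z = Qz m K w v z - EQ m K wstar w v"
proof -
  obtain x y where z: "z = (x, y)" by (cases z)
  show ?thesis
    unfolding Gvar_def EQ_def Qz_sum[OF K] z
    by (simp add: sum_subtractf[symmetric] algebra_simps)
qed

lemma EQ_int:
  assumes K: "K \<ge> 1"
  shows "EQ m K wstar w v = (\<integral>z. Qz m K w v z \<partial>data_measure m K wstar)"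
proof -
  let ?M = "data_measure m K wstar"
  let ?h = "\<lambda>i j. (\<lambda>(x, y). hess (\<lambda>u. loss m K u x y) w i j)"
  have int: "integrable ?M (\<lambda>z. v i * ?h i j z * v j)" if "i \<in> {..<m}" "j \<in> {..<m}" for i j
    using that by (intro integrable_mult_left integrable_mult_right) (use integrable_h[OF K] in auto)
  have int2: "integrable ?M (\<lambda>z. \<Sum>j<m. v i * ?h i j z * v j)" if i: "i \<in> {..<m}" for i
  proof (rule Bochner_Integration.integrable_sum)
    fix j assume j: "j \<in> {..<m}"
    show "integrable ?M (\<lambda>z. v i * ?h i j z * v j)" by (rule int[OF i j])
  qed
  have "(\<integral>z. Qz m K w v z \<partial>?M) = (\<integral>z. (\<Sum>i<m. \<Sum>j<m. v i * ?h i j z * v j) \<partial>?M)"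
    by (intro Bochner_Integration.integral_cong refl) (simp add: Qz_sum[OF K])
  also have "\<dots> = (\<Sum>i<m. (\<integral>z. (\<Sum>j<m. v i * ?h i j z * v j) \<partial>?M))"
    by (rule Bochner_Integration.integral_sum[where f="\<lambda>i z. \<Sum>j<m. v i * ?h i j z * v j"])
       (rule int2)
  also have "\<dots> = (\<Sum>i<m. \<Sum>j<m. (\<integral>z. v i * ?h i j z * v j \<partial>?M))"
  proof (intro sum.cong refl)
    fix i assume i: "i \<in> {..<m}"
    show "(\<integral>z. (\<Sum>j<m. v i * ?h i j z * v j) \<partial>?M) = (\<Sum>j<m. (\<integral>z. v i * ?h i j z * v j \<partial>?M))"
      by (rule Bochner_Integration.integral_sum[where f="\<lambda>j z. v i * ?h i j z * v j"])
         (intro int i, auto)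
  qed
  also have "\<dots> = (\<Sum>i<m. \<Sum>j<m. v i * exp_hess m K wstar w i j * v j)"
    unfolding exp_hess_def by (intro sum.cong refl) simp
  finally show ?thesis unfolding EQ_def by simp
qed

lemma S_int:
  assumes "(\<Sum>i<m. (v i)^2) = 1" and that: "0 \<le> c"
  shows "(\<integral>\<^sup>+x. ennreal (c * (\<Sum>k<K. (blk_inner m v x k)^2)) \<partial>gauss_vec (m*K)) \<le> ennreal (c * (4 * real K))"
proof -
  have pt: "ennreal (c * (\<Sum>k<K. (blk_inner m v x k)^2)) = ennreal c * (\<Sum>k<K. ennreal ((blk_inner m v x k)^2))" for x
    using that by (simp add: ennreal_mult sum_nonneg)
  have "(\<integral>\<^sup>+x. ennreal (c * (\<Sum>k<K. (blk_inner m v x k)^2)) \<partial>gauss_vec (m*K))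
      = ennreal c * (\<Sum>k<K. (\<integral>\<^sup>+x. ennreal ((blk_inner m v x k)^2) \<partial>gauss_vec (m*K)))"
  proof -
    have "(\<integral>\<^sup>+x. ennreal c * (\<Sum>k<K. ennreal ((blk_inner m v x k)^2)) \<partial>gauss_vec (m*K))
        = ennreal c * (\<integral>\<^sup>+x. (\<Sum>k<K. ennreal ((blk_inner m v x k)^2)) \<partial>gauss_vec (m*K))"
      by (rule nn_integral_cmult) measurable
    also have "(\<integral>\<^sup>+x. (\<Sum>k<K. ennreal ((blk_inner m v x k)^2)) \<partial>gauss_vec (m*K))
        = (\<Sum>k<K. (\<integral>\<^sup>+x. ennreal ((blk_inner m v x k)^2) \<partial>gauss_vec (m*K)))"
      by (rule nn_integral_sum) measurable
    finally show ?thesis unfolding pt .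
  qed
  also have "\<dots> \<le> ennreal c * (\<Sum>k<K. 4)"
    using sq_blk assms by (intro mult_left_mono sum_mono) auto
  also have "\<dots> = ennreal (c * (4 * real K))"
    using that by (simp add: ennreal_mult ennreal_of_nat_eq_real_of_nat[symmetric] mult.commute)
  finally show ?thesis .
qed

lemma EQ_bound:
  assumes K: "K \<ge> 1" and v: "(\<Sum>i<m. (v i)^2) = 1"
  shows "\<bar>EQ m K wstar w v\<bar> \<le> 8 * real K * (real K + 1)"
proof -
  let ?M = "data_measure m K wstar"
  have mq[measurable]: "Qz m K w v \<in> borel_measurable ?M" by (rule Qz_meas)
  have "\<bar>EQ m K wstar w v\<bar> \<le> (\<integral>z. \<bar>Qz m K w v z\<bar> \<partial>?M)"
    unfolding EQ_int[OF K] by (rule integral_abs_bound)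
  also have "\<dots> = enn2real (\<integral>\<^sup>+z. ennreal \<bar>Qz m K w v z\<bar> \<partial>?M)"
    by (rule integral_eq_nn_integral[OF borel_measurable_abs[OF mq]]) simp
  also have "\<dots> \<le> enn2real (ennreal (8 * real K * (real K + 1)))"
  proof (rule enn2real_mono)
    have "(\<integral>\<^sup>+z. ennreal \<bar>Qz m K w v z\<bar> \<partial>?M) \<le>
          (\<integral>\<^sup>+z. ennreal ((real K + 1) * (\<Sum>k<K. (blk_inner m v (fst z) k)^2)) \<partial>?M)"
    proof (intro nn_integral_mono ennreal_leI)
      fix z show "\<bar>Qz m K w v z\<bar> \<le> (real K + 1) * (\<Sum>k<K. (blk_inner m v (fst z) k)^2)"
        unfolding Qz_eq by (rule Qf_bound[OF K sg_sq])
    qed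
    also have "\<dots> \<le> 2 * (\<integral>\<^sup>+x. ennreal ((real K + 1) * (\<Sum>k<K. (blk_inner m v x k)^2)) \<partial>gauss_vec (m*K))"
      by (rule data_int[OF K]) measurable
    also have "\<dots> \<le> 2 * ennreal ((real K + 1) * (4 * real K))"
      by (intro mult_left_mono S_int[OF v]) auto
    also have "\<dots> = ennreal (2 * ((real K + 1) * (4 * real K)))"
      by (subst ennreal_mult) auto
    also have "\<dots> = ennreal (8 * real K * (real K + 1))"
      by (rule arg_cong[where f=ennreal]) (simp add: algebra_simps)
    finally show "(\<integral>\<^sup>+z. ennreal \<bar>Qz m K w v z\<bar> \<partial>?M) \<le> ennreal (8 * real K * (real K + 1))" .
  qed simp
  also have "\<dots> = 8 * real K * (real K + 1)" by simp
  finally show ?thesis .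
qed



lemma conv_avg:
  fixes b :: "nat \<Rightarrow> real"
  assumes K: "K \<ge> 1" and p: "p \<ge> 1" and b: "\<And>k. 0 < b k"
  shows "(\<Sum>k<K. (1 / real K) * b k) powr p \<le> (\<Sum>k<K. (1 / real K) * b k powr p)"
proof -
  have "(\<lambda>x. x powr p) ((\<Sum>k\<in>{..<K}. (1 / real K) *\<^sub>R b k)) \<le> (\<Sum>k\<in>{..<K}. (1 / real K) * (\<lambda>x. x powr p) (b k))"
    by (rule convex_on_sum[OF _ _ powr_convex[OF p]]) (use K b in \<open>auto simp: lessThan_empty_iff\<close>)
  then show ?thesis by simp
qed

lemma b_bound:
  fixes a :: real
  assumes p: "p \<ge> 1"
  shows "(a^2 + 8) powr p \<le> 2 powr p * (\<bar>a\<bar> powr (2*p) + 8 powr p)"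
proof -
  have a2: "a^2 = \<bar>a\<bar> powr 2" by simp
  have "(a^2 + 8) powr p \<le> (2 * max (a^2) 8) powr p"
    by (intro powr_mono2) (use p in auto)
  also have "\<dots> = 2 powr p * max (a^2) 8 powr p" by (simp add: powr_mult)
  also have "max (a^2) 8 powr p \<le> \<bar>a\<bar> powr (2*p) + 8 powr p"
  proof (cases "a^2 \<le> 8")
    case True then show ?thesis by (simp add: max_def)
  next
    case False
    have e: "(a^2) powr p = \<bar>a\<bar> powr (2*p)"
    proof -
      have "\<bar>a\<bar> powr (2*p) = (\<bar>a\<bar> powr 2) powr p" by (simp only: powr_powr)
      also have "\<bar>a\<bar> powr 2 = a^2" by simp
      finally show ?thesis by (rule sym)
    qed
    from False have "max (a^2) 8 powr p = \<bar>a\<bar> powr (2*p)" using e by (simp add: max_def)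
    then show ?thesis by simp
  qed
  then have "2 powr p * max (a^2) 8 powr p \<le> 2 powr p * (\<bar>a\<bar> powr (2*p) + 8 powr p)"
    by (intro mult_left_mono) auto
  finally show ?thesis .
qed

definition Bp :: "nat \<Rightarrow> nat \<Rightarrow> real \<Rightarrow> (nat \<Rightarrow> real) \<Rightarrow> (nat \<Rightarrow> real) \<Rightarrow> real" where
  "Bp m K p v x = ((real K + 1) * real K) powr p *
     (\<Sum>k<K. (1 / real K) * (2 powr p * (\<bar>blk_inner m v x k\<bar> powr (2*p) + 8 powr p)))"

lemma Bp_meas[measurable]: "Bp m K p v \<in> borel_measurable (gauss_vec n)"
  unfolding Bp_def by measurable

lemma G_pt:
  assumes K: "K \<ge> 1" and p: "p \<ge> 1" and v: "(\<Sum>i<m. (v i)^2) = 1"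
  shows "\<bar>Gvar m K wstar w v z\<bar> powr p \<le> Bp m K p v (fst z)"
proof -
  let ?a = "\<lambda>k. blk_inner m v (fst z) k"
  have "\<bar>Gvar m K wstar w v z\<bar> \<le> \<bar>Qz m K w v z\<bar> + \<bar>EQ m K wstar w v\<bar>"
    unfolding G_decomp[OF K] by (rule abs_triangle_ineq4)
  also have "\<dots> \<le> (real K + 1) * (\<Sum>k<K. (?a k)^2) + 8 * real K * (real K + 1)"
    using Qf_bound[OF K sg_sq, of m "fst z" "snd z" w v] EQ_bound[OF K v, of wstar w]
    unfolding Qz_eq by linarith
  also have "\<dots> = ((real K + 1) * real K) * (\<Sum>k<K. (1 / real K) * ((?a k)^2 + 8))"
  proof -
    have "(\<Sum>k<K. (1 / real K) * ((?a k)^2 + 8)) = (1 / real K) * (\<Sum>k<K. (?a k)^2) + 8"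
      using K by (simp add: add_divide_distrib sum.distrib sum_divide_distrib[symmetric])
    then show ?thesis using K by (simp add: field_simps)
  qed
  finally have g: "\<bar>Gvar m K wstar w v z\<bar> \<le> ((real K + 1) * real K) * (\<Sum>k<K. (1 / real K) * ((?a k)^2 + 8))" .
  have "\<bar>Gvar m K wstar w v z\<bar> powr p \<le> (((real K + 1) * real K) * (\<Sum>k<K. (1 / real K) * ((?a k)^2 + 8))) powr p"
    by (rule powr_mono2) (use p g in auto)
  also have "\<dots> = ((real K + 1) * real K) powr p * (\<Sum>k<K. (1 / real K) * ((?a k)^2 + 8)) powr p"
    by (rule powr_mult)
  also have "\<dots> \<le> ((real K + 1) * real K) powr p * (\<Sum>k<K. (1 / real K) * ((?a k)^2 + 8) powr p)"
    by (intro mult_left_mono conv_avg[OF K p]) (auto simp: add_nonneg_pos)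
  also have "\<dots> \<le> Bp m K p v (fst z)"
    unfolding Bp_def
    by (intro mult_left_mono sum_mono b_bound[OF p]) auto
  finally show ?thesis .
qed



lemma nn_cmult_le:
  fixes f :: "'a \<Rightarrow> real"
  assumes f[measurable]: "f \<in> borel_measurable N" and c: "0 \<le> c" and fn: "\<And>x. 0 \<le> f x"
    and le: "(\<integral>\<^sup>+x. ennreal (f x) \<partial>N) \<le> ennreal d"
  shows "(\<integral>\<^sup>+x. ennreal (c * f x) \<partial>N) \<le> ennreal (c * d)"
proof -
  have "(\<integral>\<^sup>+x. ennreal (c * f x) \<partial>N) = (\<integral>\<^sup>+x. ennreal c * ennreal (f x) \<partial>N)"
    using c fn by (simp add: ennreal_mult)
  also have "\<dots> = ennreal c * (\<integral>\<^sup>+x. ennreal (f x) \<partial>N)"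
    by (rule nn_integral_cmult) measurable
  also have "\<dots> \<le> ennreal c * ennreal d" by (rule mult_left_mono[OF le]) simp
  also have "\<dots> = ennreal (c * d)"
  proof (cases "0 \<le> d")
    case True then show ?thesis using c by (simp add: ennreal_mult)
  next
    case False
    then have "c * d \<le> 0" using c by (simp add: mult_nonneg_nonpos)
    then show ?thesis using False by (simp add: ennreal_neg)
  qed
  finally show ?thesis .
qed

lemma nn_add_le:
  fixes f g :: "'a \<Rightarrow> real"
  assumes [measurable]: "f \<in> borel_measurable N" "g \<in> borel_measurable N"
    and fn: "\<And>x. 0 \<le> f x" and gn: "\<And>x. 0 \<le> g x" and d: "0 \<le> d1" "0 \<le> d2"
    and le1: "(\<integral>\<^sup>+x. ennreal (f x) \<partial>N) \<le> ennreal d1"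
    and le2: "(\<integral>\<^sup>+x. ennreal (g x) \<partial>N) \<le> ennreal d2"
  shows "(\<integral>\<^sup>+x. ennreal (f x + g x) \<partial>N) \<le> ennreal (d1 + d2)"
proof -
  have "(\<integral>\<^sup>+x. ennreal (f x + g x) \<partial>N) = (\<integral>\<^sup>+x. ennreal (f x) + ennreal (g x) \<partial>N)"
    using fn gn by simp
  also have "\<dots> = (\<integral>\<^sup>+x. ennreal (f x) \<partial>N) + (\<integral>\<^sup>+x. ennreal (g x) \<partial>N)"
    by (rule nn_integral_add) measurable
  also have "\<dots> \<le> ennreal d1 + ennreal d2" by (rule add_mono[OF le1 le2])
  also have "\<dots> = ennreal (d1 + d2)" using d by simp
  finally show ?thesis .
qed

lemma nn_sum_le:
  fixes f :: "nat \<Rightarrow> 'a \<Rightarrow> real"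
  assumes [measurable]: "\<And>k. f k \<in> borel_measurable N"
    and fn: "\<And>k x. 0 \<le> f k x" and d: "\<And>k. 0 \<le> d k"
    and le: "\<And>k. k < K \<Longrightarrow> (\<integral>\<^sup>+x. ennreal (f k x) \<partial>N) \<le> ennreal (d k)"
  shows "(\<integral>\<^sup>+x. ennreal (\<Sum>k<K. f k x) \<partial>N) \<le> ennreal (\<Sum>k<K. d k)"
proof -
  have "(\<integral>\<^sup>+x. ennreal (\<Sum>k<K. f k x) \<partial>N) = (\<integral>\<^sup>+x. (\<Sum>k<K. ennreal (f k x)) \<partial>N)"
    using fn by (simp add: sum_nonneg)
  also have "\<dots> = (\<Sum>k<K. (\<integral>\<^sup>+x. ennreal (f k x) \<partial>N))"
    by (rule nn_integral_sum) measurable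
  also have "\<dots> \<le> (\<Sum>k<K. ennreal (d k))" by (intro sum_mono le) simp
  also have "\<dots> = ennreal (\<Sum>k<K. d k)" using d by simp
  finally show ?thesis .
qed

lemma nn_const_le:
  assumes "prob_space N" "0 \<le> c"
  shows "(\<integral>\<^sup>+x. ennreal c \<partial>N) \<le> ennreal c"
  using prob_space.emeasure_space_1[OF assms(1)] by simp

lemma Bp_int:
  assumes K: "K \<ge> 1" and p: "p \<ge> 1" and v: "(\<Sum>i<m. (v i)^2) = 1"
  shows "(\<integral>\<^sup>+x. ennreal (Bp m K p v x) \<partial>gauss_vec (m*K)) \<le>
     ennreal (((real K + 1) * real K) powr p * (\<Sum>k<K. (1 / real K) * (2 powr p * (2 * (2*p) powr p + 8 powr p))))"
  unfolding Bp_def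
proof (rule nn_cmult_le)
  let ?G = "gauss_vec (m*K)"
  show "(\<integral>\<^sup>+x. ennreal (\<Sum>k<K. (1 / real K) * (2 powr p * (\<bar>blk_inner m v x k\<bar> powr (2*p) + 8 powr p))) \<partial>?G)
     \<le> ennreal (\<Sum>k<K. (1 / real K) * (2 powr p * (2 * (2*p) powr p + 8 powr p)))"
  proof (rule nn_sum_le)
    fix k assume k: "k < K"
    show "(\<integral>\<^sup>+x. ennreal ((1 / real K) * (2 powr p * (\<bar>blk_inner m v x k\<bar> powr (2*p) + 8 powr p))) \<partial>?G)
       \<le> ennreal ((1 / real K) * (2 powr p * (2 * (2*p) powr p + 8 powr p)))"
    proof (rule nn_cmult_le)
      show "(\<integral>\<^sup>+x. ennreal (2 powr p * (\<bar>blk_inner m v x k\<bar> powr (2*p) + 8 powr p)) \<partial>?G)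
         \<le> ennreal (2 powr p * (2 * (2*p) powr p + 8 powr p))"
      proof (rule nn_cmult_le)
        show "(\<integral>\<^sup>+x. ennreal (\<bar>blk_inner m v x k\<bar> powr (2*p) + 8 powr p) \<partial>?G)
           \<le> ennreal (2 * (2*p) powr p + 8 powr p)"
        proof (rule nn_add_le)
          show "(\<integral>\<^sup>+x. ennreal (\<bar>blk_inner m v x k\<bar> powr (2*p)) \<partial>?G) \<le> ennreal (2 * (2*p) powr p)"
            using mom_blk[OF k _ v, of "2*p"] p by simp
          show "(\<integral>\<^sup>+x. ennreal (8 powr p) \<partial>?G) \<le> ennreal (8 powr p)"
            by (rule nn_const_le[OF prob_gauss_vec]) simp
        qed (auto)
      qed (auto intro!: add_nonneg_nonneg)
    qed (auto intro!: mult_nonneg_nonneg add_nonneg_nonneg)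
  qed (auto intro!: mult_nonneg_nonneg add_nonneg_nonneg)
qed (auto intro!: sum_nonneg mult_nonneg_nonneg add_nonneg_nonneg)



lemma numeric:
  assumes K: "K \<ge> 1" and p: "p \<ge> 1"
  shows "2 * (((real K + 1) * real K) powr p * (\<Sum>k<K. (1 / real K) * (2 powr p * (2 * (2*p) powr p + 8 powr p))))
         \<le> 6 * (16 * p * (real K + 1) * real K) powr p"
proof -
  let ?X = "2 powr p * (2 * (2*p) powr p + 8 powr p)"
  have s: "(\<Sum>k<K. (1 / real K) * ?X) = ?X" using K by simp
  have a: "(2*p) powr p \<le> (8*p) powr p" by (rule powr_mono2) (use p in auto)
  have b: "(8::real) powr p \<le> (8*p) powr p" by (rule powr_mono2) (use p in auto)
  have "2 * (2*p) powr p + 8 powr p \<le> 3 * (8*p) powr p" using a b by simp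
  then have "?X \<le> 2 powr p * (3 * (8*p) powr p)" by (intro mult_left_mono) auto
  then have "((real K + 1) * real K) powr p * ?X \<le> ((real K + 1) * real K) powr p * (2 powr p * (3 * (8*p) powr p))"
    by (intro mult_left_mono) auto
  also have "\<dots> = 3 * (((real K + 1) * real K) powr p * 2 powr p * (8*p) powr p)" by simp
  also have "((real K + 1) * real K) powr p * 2 powr p * (8*p) powr p = (((real K + 1) * real K) * 2 * (8*p)) powr p"
    by (simp only: powr_mult mult.assoc)
  also have "((real K + 1) * real K) * 2 * (8*p) = 16 * p * (real K + 1) * real K" by simp
  finally show ?thesis unfolding s by (simp add: mult_ac)
qed

theorem lemma9:
  fixes c :: real
  assumes "c > 0"
  shows "\<exists>C::real. \<forall>(m::nat) (K::nat) (wstar::nat \<Rightarrow> real) (w::nat \<Rightarrow> real) (v::nat \<Rightarrow> real).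
           m \<ge> 1 \<longrightarrow> K \<ge> 1 \<longrightarrow>
           vnorm m wstar \<le> 1 \<longrightarrow>
           vnorm m (\<lambda>i. w i - wstar i) \<le> c * rho_cnn (vnorm m wstar) / (real K)^2 \<longrightarrow>
           vnorm m v = 1 \<longrightarrow>
           psi1_norm (data_measure m K wstar) (Gvar m K wstar w v) \<le> ereal (C * (real K)^2)"
proof (intro exI[of _ 192] allI impI)
  fix m K :: nat and wstar w v :: "nat \<Rightarrow> real"
  assume K: "1 \<le> K" and vn: "vnorm m v = 1"
  have v: "(\<Sum>i<m. (v i)^2) = 1" by (rule vnorm_one[OF vn])
  show "psi1_norm (data_measure m K wstar) (Gvar m K wstar w v) \<le> ereal (192 * (real K)^2)"
    unfolding psi1_norm_def
  proof (rule SUP_least)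
    fix p :: real assume "p \<in> {1..}"
    then have p: "1 \<le> p" by simp
    define mom where "mom = (\<integral>\<^sup>+\<omega>. ennreal (\<bar>Gvar m K wstar w v \<omega>\<bar> powr p) \<partial>data_measure m K wstar)"
    define R where "R = 16 * p * (real K + 1) * real K"
    define T where "T = ((real K + 1) * real K) powr p * (\<Sum>k<K. (1 / real K) * (2 powr p * (2 * (2*p) powr p + 8 powr p)))"
    have T0: "0 \<le> T" unfolding T_def by (intro mult_nonneg_nonneg sum_nonneg) auto
    have R0: "0 < R" unfolding R_def using p K by simp
    have "mom \<le> (\<integral>\<^sup>+z. ennreal (Bp m K p v (fst z)) \<partial>data_measure m K wstar)"
      unfolding mom_def by (intro nn_integral_mono ennreal_leI G_pt[OF K p v])
    also have "\<dots> \<le> 2 * (\<integral>\<^sup>+x. ennreal (Bp m K p v x) \<partial>gauss_vec (m*K))"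
      by (rule data_int[OF K]) measurable
    also have "\<dots> \<le> 2 * ennreal T"
      unfolding T_def by (intro mult_left_mono Bp_int[OF K p v]) simp
    also have "\<dots> = ennreal (2 * T)" using T0 by (subst ennreal_mult) auto
    also have "\<dots> \<le> ennreal (6 * R powr p)"
      unfolding T_def R_def by (intro ennreal_leI numeric[OF K p])
    finally have mom_le: "mom \<le> ennreal (6 * R powr p)" .
    then have mtop: "mom \<noteq> \<top>" by (metis ennreal_less_top leD)
    have em: "enn2real mom \<le> 6 * R powr p"
      using enn2real_mono[OF mom_le] by simp
    have "enn2real mom powr (1/p) \<le> (6 * R powr p) powr (1/p)"
      by (rule powr_mono2) (use p em in auto)
    also have "\<dots> = 6 powr (1/p) * R"
    proof -
      have "(R powr p) powr (1/p) = R" using p R0 by (simp add: powr_powr)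
      then show ?thesis by (simp add: powr_mult)
    qed
    also have "\<dots> \<le> 6 * R"
    proof -
      have "(6::real) powr (1/p) \<le> 6 powr 1" by (rule powr_mono) (use p in auto)
      then show ?thesis using R0 by (intro mult_right_mono) auto
    qed
    finally have e1: "enn2real mom powr (1/p) \<le> 6 * R" .
    have "enn2real mom powr (1/p) / p \<le> 6 * R / p"
      using e1 p by (simp add: divide_right_mono)
    also have "6 * R / p = 96 * (real K + 1) * real K" unfolding R_def using p by simp
    also have "\<dots> \<le> 192 * (real K)^2" using K by (simp add: power2_eq_square)
    finally have e2: "enn2real mom powr (1/p) / p \<le> 192 * (real K)^2" .
    show "(let mom = \<integral>\<^sup>+ \<omega>. ennreal (\<bar>Gvar m K wstar w v \<omega>\<bar> powr p) \<partial>data_measure m K wstar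
           in if mom = \<top> then \<infinity> else ereal (enn2real mom powr (1 / p) / p)) \<le> ereal (192 * (real K)^2)"
      unfolding Let_def mom_def[symmetric] using mtop e2 by simp
  qed
qed


end
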